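(* Let $H$ be a finitely generated group, let $\phi\in\operatorname{Aut}(H)$ and let $K$ be a proper subgroup of $H$. Let $G=H\ast_{(K,\phi)}=\langle H, t;\ tkt^{-1}=\phi(k),\ k\in K\rangle$. If the group $N_H(K)/K$ is not residually finite, then $G$ is not residually finite.
   Context: For a group $H$, $\phi\in\operatorname{Aut}(H)$ and a proper subgroup $K\lneq H$, the automorphism-induced HNN-extension $H\ast_{(K,\phi)}$ is the group given by the relative presentation $\langle H, t;\ tkt^{-1}=\phi(k),\ k\in K\rangle$. $N_H(K)$ denotes the normalizer of $K$ in $H$. *)

theory Defs
  imports "HOL-Algebra.Algebra"
begin

definition residually_finite :: "('a, 'b) monoid_scheme \<Rightarrow> bool" where
  "residually_finite G \<longleftrightarrow>
     (\<forall>g \<in> carrier G. g \<noteq> \<one>\<^bsub>G\<^esub> \<longrightarrow>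
        (\<exists>N. N \<lhd> G \<and> finite (rcosets\<^bsub>G\<^esub> N) \<and> g \<notin> N))"

definition finitely_generated :: "('a, 'b) monoid_scheme \<Rightarrow> bool" where
  "finitely_generated G \<longleftrightarrow>
     (\<exists>S. finite S \<and> S \<subseteq> carrier G \<and> generate G S = carrier G)"

text \<open>Letters of the HNN-extension: \<open>Inl h\<close> is an element of \<open>H\<close>,
\<open>Inr True\<close> is the stable letter \<open>t\<close>, \<open>Inr False\<close> is \<open>t\<inverse>\<close>.\<close>
type_synonym 'a hnn_word = "('a + bool) list"

definition hnn_words :: "('a, 'b) monoid_scheme \<Rightarrow> 'a hnn_word set" where
  "hnn_words H = {w. \<forall>x \<in> set w. case x of Inl h \<Rightarrow> h \<in> carrier H | Inr _ \<Rightarrow> True}"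

inductive hnn_eq :: "('a, 'b) monoid_scheme \<Rightarrow> 'a set \<Rightarrow> ('a \<Rightarrow> 'a)
    \<Rightarrow> 'a hnn_word \<Rightarrow> 'a hnn_word \<Rightarrow> bool"
  for H K \<phi> where
  refl: "w \<in> hnn_words H \<Longrightarrow> hnn_eq H K \<phi> w w"
| sym: "hnn_eq H K \<phi> u v \<Longrightarrow> hnn_eq H K \<phi> v u"
| trans: "hnn_eq H K \<phi> u v \<Longrightarrow> hnn_eq H K \<phi> v w \<Longrightarrow> hnn_eq H K \<phi> u w"
| cong: "hnn_eq H K \<phi> u v \<Longrightarrow> a \<in> hnn_words H \<Longrightarrow> b \<in> hnn_words H
          \<Longrightarrow> hnn_eq H K \<phi> (a @ u @ b) (a @ v @ b)"
| one: "hnn_eq H K \<phi> [Inl \<one>\<^bsub>H\<^esub>] []"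
| mult: "x \<in> carrier H \<Longrightarrow> y \<in> carrier H
          \<Longrightarrow> hnn_eq H K \<phi> [Inl x, Inl y] [Inl (x \<otimes>\<^bsub>H\<^esub> y)]"
| t_inv: "hnn_eq H K \<phi> [Inr True, Inr False] []"
| inv_t: "hnn_eq H K \<phi> [Inr False, Inr True] []"
| conj: "k \<in> K \<Longrightarrow> hnn_eq H K \<phi> [Inr True, Inl k, Inr False] [Inl (\<phi> k)]"

definition hnn_class :: "('a, 'b) monoid_scheme \<Rightarrow> 'a set \<Rightarrow> ('a \<Rightarrow> 'a)
    \<Rightarrow> 'a hnn_word \<Rightarrow> 'a hnn_word set" where
  "hnn_class H K \<phi> w = {v. hnn_eq H K \<phi> w v}"

definition hnn_mult :: "('a, 'b) monoid_scheme \<Rightarrow> 'a set \<Rightarrow> ('a \<Rightarrow> 'a)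
    \<Rightarrow> 'a hnn_word set \<Rightarrow> 'a hnn_word set \<Rightarrow> 'a hnn_word set" where
  "hnn_mult H K \<phi> A B = hnn_class H K \<phi> ((SOME u. u \<in> A) @ (SOME v. v \<in> B))"

definition HNN :: "('a, 'b) monoid_scheme \<Rightarrow> 'a set \<Rightarrow> ('a \<Rightarrow> 'a)
    \<Rightarrow> 'a hnn_word set monoid" where
  "HNN H K \<phi> =
    \<lparr> carrier = hnn_class H K \<phi> ` hnn_words H,
      monoid.mult = hnn_mult H K \<phi>,
      one = hnn_class H K \<phi> [] \<rparr>"

end

theory Submission
  imports Defs
begin

definition sig :: "'a set \<Rightarrow> ('a \<times> bool) \<Rightarrow> ('a \<times> bool)" where
  "sig K p = (if fst p \<in> K then (fst p, \<not> snd p) else p)"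

fun act :: "('a,'b) monoid_scheme \<Rightarrow> 'a set \<Rightarrow> ('a \<Rightarrow> 'a) \<Rightarrow> ('a + bool) \<Rightarrow> 'a \<times> bool \<Rightarrow> 'a \<times> bool" where
  "act H K \<phi> (Inl h) p = (h \<otimes>\<^bsub>H\<^esub> fst p, snd p)"
| "act H K \<phi> (Inr True) p = (\<phi> (fst (sig K p)), snd (sig K p))"
| "act H K \<phi> (Inr False) p = sig K (inv_into (carrier H) \<phi> (fst p), snd p)"

definition actw where "actw H K \<phi> w p = foldr (act H K \<phi>) w p"

lemma actw_append: "actw H K \<phi> (u @ v) p = actw H K \<phi> u (actw H K \<phi> v p)"
  by (simp add: actw_def)

lemma act_closed:
  assumes "group H" "\<phi> \<in> iso H H" "(case c of Inl h \<Rightarrow> h \<in> carrier H | Inr _ \<Rightarrow> True)"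
    "fst p \<in> carrier H"
  shows "fst (act H K \<phi> c p) \<in> carrier H"
proof -
  have bij: "bij_betw \<phi> (carrier H) (carrier H)" using assms(2) by (simp add: iso_def)
  show ?thesis
  proof (cases c)
    case (Inl h) then show ?thesis using assms by (auto intro: group.is_monoid monoid.m_closed)
  next
    case (Inr b)
    show ?thesis
    proof (cases b)
      case True then show ?thesis using Inr assms bij by (auto simp: sig_def bij_betw_def)
    next
      case False then show ?thesis using Inr assms bij
        by (auto simp: sig_def bij_betw_def inv_into_into)
    qed
  qed
qed

lemma actw_closed:
  assumes "group H" "\<phi> \<in> iso H H" "w \<in> hnn_words H" "fst p \<in> carrier H"
  shows "fst (actw H K \<phi> w p) \<in> carrier H"
  using assms(3)
proof (induction w)
  case Nil then show ?case using assms by (simp add: actw_def)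
next
  case (Cons c w)
  then have "w \<in> hnn_words H" "(case c of Inl h \<Rightarrow> h \<in> carrier H | Inr _ \<Rightarrow> True)"
    by (auto simp: hnn_words_def)
  then show ?case using Cons act_closed[OF assms(1,2)] by (simp add: actw_def)
qed


lemma hnn_eq_actw:
  assumes G: "group H" and I: "\<phi> \<in> iso H H" and S: "subgroup K H"
  shows "hnn_eq H K \<phi> u v \<Longrightarrow> fst p \<in> carrier H \<Longrightarrow> actw H K \<phi> u p = actw H K \<phi> v p"
proof (induction u v arbitrary: p rule: hnn_eq.induct)
  case (cong u v a b)
  have "fst (actw H K \<phi> b p) \<in> carrier H" using actw_closed[OF G I cong.hyps(3) cong.prems] .
  then show ?case using cong by (simp add: actw_append)
next
  case one then show ?case using G by (simp add: actw_def group.is_monoid monoid.l_one)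
next
  case (mult x y) then show ?case using G by (simp add: actw_def group.is_monoid monoid.m_assoc)
next
  case t_inv
  have bij: "bij_betw \<phi> (carrier H) (carrier H)" using I by (simp add: iso_def)
  show ?case using t_inv bij
    by (auto simp: actw_def sig_def bij_betw_def f_inv_into_f inv_into_into)
next
  case inv_t
  have bij: "bij_betw \<phi> (carrier H) (carrier H)" using I by (simp add: iso_def)
  show ?case using inv_t bij
    by (auto simp: actw_def sig_def bij_betw_def inv_into_f_f)
next
  case (conj k)
  have bij: "bij_betw \<phi> (carrier H) (carrier H)" using I by (simp add: iso_def)
  have hom: "\<phi> \<in> hom H H" using I by (simp add: iso_def)
  obtain x b where p: "p = (x, b)" by (cases p)
  have x: "x \<in> carrier H" using conj p by simp
  define y where "y = inv_into (carrier H) \<phi> x"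
  have y: "y \<in> carrier H" "\<phi> y = x" using x bij unfolding y_def
    by (auto simp: bij_betw_def inv_into_into f_inv_into_f)
  have k: "k \<in> carrier H" using S conj by (auto dest: subgroup.subset)
  have kyK: "k \<otimes>\<^bsub>H\<^esub> y \<in> K \<longleftrightarrow> y \<in> K"
  proof
    assume "k \<otimes>\<^bsub>H\<^esub> y \<in> K"
    then have "inv\<^bsub>H\<^esub> k \<otimes>\<^bsub>H\<^esub> (k \<otimes>\<^bsub>H\<^esub> y) \<in> K"
      using S conj by (simp add: subgroup.m_closed subgroup.m_inv_closed)
    then show "y \<in> K" using G k y by (simp add: group.inv_solve_left' group.l_inv group.is_monoid monoid.m_assoc[symmetric]
          group.inv_closed monoid.l_one)
  next
    assume "y \<in> K" then show "k \<otimes>\<^bsub>H\<^esub> y \<in> K" using S conj by (simp add: subgroup.m_closed)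
  qed
  have "\<phi> (k \<otimes>\<^bsub>H\<^esub> y) = \<phi> k \<otimes>\<^bsub>H\<^esub> x" using hom k y by (simp add: hom_mult)
  moreover have yx: "inv_into (carrier H) \<phi> x = y" by (simp add: y_def)
  ultimately show ?case using kyK p
    by (simp add: actw_def sig_def)
qed (auto)


locale hnn_setup = group H for H (structure) +
  fixes K and \<phi> :: "'a \<Rightarrow> 'a"
  assumes phi_iso: "\<phi> \<in> iso H H" and K_sub: "subgroup K H"
begin

abbreviation "cls \<equiv> hnn_class H K \<phi>"
abbreviation "GG \<equiv> HNN H K \<phi>"

lemma phi_hom: "\<phi> \<in> hom H H" using phi_iso by (simp add: iso_def)
lemma phi_closed: "x \<in> carrier H \<Longrightarrow> \<phi> x \<in> carrier H"
  using phi_hom by (auto simp: hom_def)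
lemma phi_mult: "x \<in> carrier H \<Longrightarrow> y \<in> carrier H \<Longrightarrow> \<phi> (x \<otimes> y) = \<phi> x \<otimes> \<phi> y"
  using phi_hom by (simp add: hom_mult)
lemma phi_inv: "x \<in> carrier H \<Longrightarrow> \<phi> (inv x) = inv (\<phi> x)"
proof -
  interpret gh: group_hom H H \<phi> using phi_hom by (unfold_locales) auto
  show "x \<in> carrier H \<Longrightarrow> \<phi> (inv x) = inv (\<phi> x)" by simp
qed
lemma K_carr: "K \<subseteq> carrier H" using K_sub by (rule subgroup.subset)

lemma hnn_eq_words: "hnn_eq H K \<phi> u v \<Longrightarrow> u \<in> hnn_words H \<and> v \<in> hnn_words H"
  by (induction rule: hnn_eq.induct)
     (use K_carr phi_closed in \<open>auto simp: hnn_words_def\<close>)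

lemma cls_eq: "u \<in> hnn_words H \<Longrightarrow> cls u = cls v \<longleftrightarrow> hnn_eq H K \<phi> u v"
proof
  assume u: "u \<in> hnn_words H" and "cls u = cls v"
  then have "u \<in> cls v" using hnn_eq.refl[OF u] by (auto simp: hnn_class_def)
  then show "hnn_eq H K \<phi> u v" by (auto simp: hnn_class_def intro: hnn_eq.sym)
next
  assume "hnn_eq H K \<phi> u v"
  then show "cls u = cls v"
    by (auto simp: hnn_class_def intro: hnn_eq.sym hnn_eq.trans)
qed

lemma cls_mult:
  assumes u: "u \<in> hnn_words H" and v: "v \<in> hnn_words H"
  shows "cls u \<otimes>\<^bsub>GG\<^esub> cls v = cls (u @ v)"
proof -
  have "\<exists>x. x \<in> cls u" using hnn_eq.refl[OF u] by (auto simp: hnn_class_def)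
  then have u': "hnn_eq H K \<phi> u (SOME x. x \<in> cls u)"
    by (metis (mono_tags) hnn_class_def mem_Collect_eq someI_ex)
  have "\<exists>x. x \<in> cls v" using hnn_eq.refl[OF v] by (auto simp: hnn_class_def)
  then have v': "hnn_eq H K \<phi> v (SOME x. x \<in> cls v)"
    by (metis (mono_tags) hnn_class_def mem_Collect_eq someI_ex)
  define u1 where "u1 = (SOME x. x \<in> cls u)"
  define v1 where "v1 = (SOME x. x \<in> cls v)"
  have u1: "u1 \<in> hnn_words H" using hnn_eq_words[OF u'] u1_def by simp
  have "hnn_eq H K \<phi> ([] @ u @ v) ([] @ u1 @ v)"
    using hnn_eq.cong[OF u'[folded u1_def], of "[]" v] v by (simp add: hnn_words_def)
  moreover have "hnn_eq H K \<phi> (u1 @ v @ []) (u1 @ v1 @ [])"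
    using hnn_eq.cong[OF v'[folded v1_def], of u1 "[]"] u1 by (simp add: hnn_words_def)
  ultimately have "hnn_eq H K \<phi> (u @ v) (u1 @ v1)" by (auto intro: hnn_eq.trans)
  then have "cls (u @ v) = cls (u1 @ v1)"
    using u v by (subst cls_eq) (auto simp: hnn_words_def)
  then show ?thesis by (simp add: HNN_def hnn_mult_def u1_def v1_def)
qed

lemma cls_carrier: "u \<in> hnn_words H \<Longrightarrow> cls u \<in> carrier GG"
  by (simp add: HNN_def)

lemma one_GG: "\<one>\<^bsub>GG\<^esub> = cls []" by (simp add: HNN_def)

end


lemma (in group) alg_ident:
  assumes "a \<in> carrier G" "p \<in> carrier G" "q \<in> carrier G" "r \<in> carrier G" "s \<in> carrier G"
  shows "a \<otimes> (p \<otimes> q) \<otimes> inv a \<otimes> inv (r \<otimes> s)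
       = (a \<otimes> p \<otimes> inv a) \<otimes> ((a \<otimes> q \<otimes> inv a) \<otimes> inv s) \<otimes> inv r"
proof -
  have "inv a \<otimes> (a \<otimes> x) = x" if "x \<in> carrier G" for x
    using that assms(1) by (simp add: m_assoc[symmetric])
  then show ?thesis using assms by (simp add: m_assoc inv_mult_group)
qed

context hnn_setup begin
lemma w0_nontriv:
  assumes n: "n \<in> carrier H" and nK: "n \<notin> K"
  shows "\<not> hnn_eq H K \<phi> [Inr True, Inl n, Inr False, Inl (inv (\<phi> n))] []"
proof
  assume h: "hnn_eq H K \<phi> [Inr True, Inl n, Inr False, Inl (inv (\<phi> n))] []"
  have "actw H K \<phi> [Inr True, Inl n, Inr False, Inl (inv (\<phi> n))] (\<one>, False)
      = actw H K \<phi> [] (\<one>, False)"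
    using hnn_eq_actw[OF is_group phi_iso K_sub h] by simp
  moreover
  have bij: "bij_betw \<phi> (carrier H) (carrier H)" using phi_iso by (simp add: iso_def)
  have ii: "inv_into (carrier H) \<phi> (inv (\<phi> n)) = inv n"
    using phi_inv[OF n] bij n by (metis bij_betw_def inv_closed inv_into_f_f)
  have "inv n \<notin> K" using nK n K_sub by (metis inv_inv subgroup.m_inv_closed)
  then have "actw H K \<phi> [Inr True, Inl n, Inr False, Inl (inv (\<phi> n))] (\<one>, False)
      = (\<phi> \<one>, True)"
    using ii n phi_closed K_sub by (simp add: actw_def sig_def subgroup.one_closed)
  ultimately show False by (simp add: actw_def)
qed
end

locale hnn_grp = hnn_setup + assumes grpG: "group (HNN H K \<phi>)"
begin

abbreviation "e x \<equiv> cls [Inl x]"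
abbreviation "tt \<equiv> cls [Inr True]"
abbreviation "ti \<equiv> cls [Inr False]"

lemma w_Inl: "x \<in> carrier H \<Longrightarrow> [Inl x] \<in> hnn_words H" by (simp add: hnn_words_def)
lemma w_Inr: "[Inr b] \<in> hnn_words H" by (simp add: hnn_words_def)

lemma e_carr: "x \<in> carrier H \<Longrightarrow> e x \<in> carrier GG" by (simp add: cls_carrier w_Inl)
lemma t_carr: "tt \<in> carrier GG" "ti \<in> carrier GG" by (simp_all add: cls_carrier w_Inr)

lemma e_mult: "x \<in> carrier H \<Longrightarrow> y \<in> carrier H \<Longrightarrow> e (x \<otimes> y) = e x \<otimes>\<^bsub>GG\<^esub> e y"
  using cls_mult[OF w_Inl w_Inl, of x y] cls_eq[of "[Inl x, Inl y]"] hnn_eq.mult[of x H y K \<phi>]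
  by (simp add: hnn_words_def) metis

lemma e_one: "e \<one> = \<one>\<^bsub>GG\<^esub>"
  using cls_eq[of "[Inl \<one>]" "[]"] hnn_eq.one[of H K \<phi>] one_GG by (simp add: hnn_words_def)

lemma e_inv: "x \<in> carrier H \<Longrightarrow> inv\<^bsub>GG\<^esub> (e x) = e (inv x)"
  using group.inv_equality[OF grpG, of "e (inv x)" "e x"] e_mult[of "inv x" x] e_one e_carr
  by simp

lemma tt_ti: "tt \<otimes>\<^bsub>GG\<^esub> ti = \<one>\<^bsub>GG\<^esub>"
  using cls_mult[OF w_Inr w_Inr, of True False] cls_eq[of "[Inr True, Inr False]" "[]"]
    hnn_eq.t_inv[of H K \<phi>] one_GG by (simp add: hnn_words_def)

lemma inv_tt: "inv\<^bsub>GG\<^esub> tt = ti"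
  using group.inv_equality[OF grpG, of ti tt] group.inv_comm[OF grpG tt_ti] t_carr
  by simp

lemma conj_e: "k \<in> K \<Longrightarrow> tt \<otimes>\<^bsub>GG\<^esub> e k \<otimes>\<^bsub>GG\<^esub> ti = e (\<phi> k)"
proof -
  assume k: "k \<in> K"
  then have kc: "k \<in> carrier H" using K_carr by auto
  have "tt \<otimes>\<^bsub>GG\<^esub> e k \<otimes>\<^bsub>GG\<^esub> ti = cls [Inr True, Inl k, Inr False]"
    using cls_mult w_Inl w_Inr kc by (simp add: hnn_words_def)
  also have "\<dots> = e (\<phi> k)"
    using cls_eq[of "[Inr True, Inl k, Inr False]"] hnn_eq.conj[OF k, of H \<phi>] kc
    by (simp add: hnn_words_def)
  finally show ?thesis .
qed


lemma w0_in_N: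
  assumes N: "normal N GG" and k: "k \<in> K" and l: "l \<in> carrier H"
    and el: "e l \<in> N" and epl: "e (\<phi> l) \<in> N"
  shows "cls [Inr True, Inl (k \<otimes> l), Inr False, Inl (inv (\<phi> (k \<otimes> l)))] \<in> N"
proof -
  interpret G: group GG by (rule grpG)
  interpret NN: normal N GG by (rule N)
  have kc: "k \<in> carrier H" using k K_carr by auto
  have n: "k \<otimes> l \<in> carrier H" using kc l by simp
  have pn: "\<phi> (k \<otimes> l) = \<phi> k \<otimes> \<phi> l" using phi_mult kc l by simp
  have c1: "cls [Inr True, Inl (k \<otimes> l), Inr False, Inl (inv (\<phi> (k \<otimes> l)))]
      = tt \<otimes>\<^bsub>GG\<^esub> e (k \<otimes> l) \<otimes>\<^bsub>GG\<^esub> ti \<otimes>\<^bsub>GG\<^esub> e (inv (\<phi> (k \<otimes> l)))"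
    using n phi_closed by (simp add: cls_mult hnn_words_def)
  also have "\<dots> = tt \<otimes>\<^bsub>GG\<^esub> (e k \<otimes>\<^bsub>GG\<^esub> e l) \<otimes>\<^bsub>GG\<^esub> inv\<^bsub>GG\<^esub> tt
       \<otimes>\<^bsub>GG\<^esub> inv\<^bsub>GG\<^esub> (e (\<phi> k) \<otimes>\<^bsub>GG\<^esub> e (\<phi> l))"
  proof -
    have "e (inv (\<phi> k \<otimes> \<phi> l)) = inv\<^bsub>GG\<^esub> (e (\<phi> k) \<otimes>\<^bsub>GG\<^esub> e (\<phi> l))"
      using e_inv[of "\<phi> k \<otimes> \<phi> l"] e_mult[of "\<phi> k" "\<phi> l"] phi_closed kc l by simp
    then show ?thesis using kc l phi_closed pn by (simp add: e_mult inv_tt)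
  qed
  also have "\<dots> = (tt \<otimes>\<^bsub>GG\<^esub> e k \<otimes>\<^bsub>GG\<^esub> inv\<^bsub>GG\<^esub> tt) \<otimes>\<^bsub>GG\<^esub>
      ((tt \<otimes>\<^bsub>GG\<^esub> e l \<otimes>\<^bsub>GG\<^esub> inv\<^bsub>GG\<^esub> tt) \<otimes>\<^bsub>GG\<^esub> inv\<^bsub>GG\<^esub> e (\<phi> l))
      \<otimes>\<^bsub>GG\<^esub> inv\<^bsub>GG\<^esub> e (\<phi> k)"
    using G.alg_ident kc l phi_closed e_carr t_carr by simp
  also have "\<dots> = e (\<phi> k) \<otimes>\<^bsub>GG\<^esub>
      ((tt \<otimes>\<^bsub>GG\<^esub> e l \<otimes>\<^bsub>GG\<^esub> inv\<^bsub>GG\<^esub> tt) \<otimes>\<^bsub>GG\<^esub> inv\<^bsub>GG\<^esub> e (\<phi> l))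
      \<otimes>\<^bsub>GG\<^esub> inv\<^bsub>GG\<^esub> e (\<phi> k)"
    using conj_e[OF k] by (simp add: inv_tt)
  also have "\<dots> \<in> N"
  proof -
    have "tt \<otimes>\<^bsub>GG\<^esub> e l \<otimes>\<^bsub>GG\<^esub> inv\<^bsub>GG\<^esub> tt \<in> N"
      using NN.inv_op_closed2 t_carr el by simp
    then have "(tt \<otimes>\<^bsub>GG\<^esub> e l \<otimes>\<^bsub>GG\<^esub> inv\<^bsub>GG\<^esub> tt) \<otimes>\<^bsub>GG\<^esub> inv\<^bsub>GG\<^esub> e (\<phi> l) \<in> N"
      using epl NN.m_closed NN.m_inv_closed by simp
    then show ?thesis using NN.inv_op_closed2 e_carr phi_closed kc by simp
  qed
  finally show ?thesis .
qed

end

lemma r_coset_upd [simp]: "r_coset (GG\<lparr>carrier := S\<rparr>) B y = r_coset GG B y"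
  by (simp add: r_coset_def)

lemma finite_image_factor:
  assumes "finite (g ` A)" and "\<And>a b. a \<in> A \<Longrightarrow> b \<in> A \<Longrightarrow> g a = g b \<Longrightarrow> f a = f b"
  shows "finite (f ` A)"
proof -
  have "f ` A \<subseteq> (\<lambda>c. f (SOME a. a \<in> A \<and> g a = c)) ` (g ` A)"
  proof
    fix z assume "z \<in> f ` A"
    then obtain a where a: "a \<in> A" "z = f a" by auto
    then have "\<exists>b. b \<in> A \<and> g b = g a" by auto
    then have "(SOME b. b \<in> A \<and> g b = g a) \<in> A \<and> g (SOME b. b \<in> A \<and> g b = g a) = g a"
      by (rule someI_ex)
    then have "f (SOME b. b \<in> A \<and> g b = g a) = z" using assms(2) a by metis
    then have "z = (\<lambda>c. f (SOME a. a \<in> A \<and> g a = c)) (g a)" by simp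
    then show "z \<in> (\<lambda>c. f (SOME a. a \<in> A \<and> g a = c)) ` (g ` A)"
      by (rule image_eqI) (use a in auto)
  qed
  then show ?thesis using assms(1) finite_subset by blast
qed

theorem corollary1p1:
  fixes H :: "('a, 'b) monoid_scheme" and K :: "'a set" and \<phi> :: "'a \<Rightarrow> 'a"
  assumes "group H"
    and "finitely_generated H"
    and "\<phi> \<in> iso H H"
    and "subgroup K H" and "K \<noteq> carrier H"
    and "\<not> residually_finite ((H\<lparr>carrier := normalizer H K\<rparr>) Mod K)"
  shows "\<not> residually_finite (HNN H K \<phi>)"
proof
  assume RF: "residually_finite (HNN H K \<phi>)"
  interpret hs: hnn_setup H K \<phi> using assms by (simp add: hnn_setup_def hnn_setup_axioms_def)
  define NH where "NH = normalizer H K"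
  define H0 where "H0 = H\<lparr>carrier := NH\<rparr>"
  define Q0 where "Q0 = H0 Mod K"
  have subNH: "subgroup NH H" unfolding NH_def
    using hs.normalizer_imp_subgroup hs.K_carr by blast
  have NHc: "NH \<subseteq> carrier H" using subNH by (rule subgroup.subset)
  have KN: "normal K H0" unfolding H0_def NH_def using hs.subgroup_in_normalizer assms(4) by blast
  interpret KN: normal K H0 by (rule KN)
  interpret Q: group Q0 unfolding Q0_def by (rule KN.factorgroup_is_group)
  have KsubNH: "K \<subseteq> NH" using KN.subset by (simp add: H0_def)
  have cQ: "carrier Q0 = (\<lambda>x. K #>\<^bsub>H\<^esub> x) ` NH"
    by (simp add: Q0_def carrier_FactGroup H0_def)
  have oneQ: "\<one>\<^bsub>Q0\<^esub> = K" by (simp add: Q0_def)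
  have multQ: "(K #>\<^bsub>H\<^esub> a) \<otimes>\<^bsub>Q0\<^esub> (K #>\<^bsub>H\<^esub> b) = K #>\<^bsub>H\<^esub> (a \<otimes>\<^bsub>H\<^esub> b)"
    if "a \<in> NH" "b \<in> NH" for a b
    using KN.rcos_sum[of a b] that by (simp add: Q0_def H0_def)
  have Kone: "K #>\<^bsub>H\<^esub> \<one>\<^bsub>H\<^esub> = K"
    using subgroup.rcos_const[OF assms(4) assms(1) subgroup.one_closed[OF assms(4)]] .
  have invQ: "inv\<^bsub>Q0\<^esub> (K #>\<^bsub>H\<^esub> a) = K #>\<^bsub>H\<^esub> (inv\<^bsub>H\<^esub> a)" if "a \<in> NH" for a
  proof (rule Q.inv_equality)
    have "inv\<^bsub>H\<^esub> a \<in> NH" using that subNH by (simp add: subgroup.m_inv_closed)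
    then show "(K #>\<^bsub>H\<^esub> (inv\<^bsub>H\<^esub> a)) \<otimes>\<^bsub>Q0\<^esub> (K #>\<^bsub>H\<^esub> a) = \<one>\<^bsub>Q0\<^esub>"
      using multQ that NHc Kone oneQ by auto
    show "K #>\<^bsub>H\<^esub> a \<in> carrier Q0" using cQ that by auto
    show "K #>\<^bsub>H\<^esub> (inv\<^bsub>H\<^esub> a) \<in> carrier Q0" using cQ \<open>inv\<^bsub>H\<^esub> a \<in> NH\<close> by auto
  qed
  obtain g0 where g0: "g0 \<in> carrier Q0" "g0 \<noteq> K"
      and g0N: "\<And>M. M \<lhd> Q0 \<Longrightarrow> finite (rcosets\<^bsub>Q0\<^esub> M) \<Longrightarrow> g0 \<in> M"
    using assms(6) unfolding residually_finite_def Q0_def[symmetric] H0_def[symmetric] NH_def[symmetric]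
    by (auto simp: Q0_def)
  obtain n where n: "n \<in> NH" "g0 = K #>\<^bsub>H\<^esub> n" using g0 cQ by auto
  have nc: "n \<in> carrier H" using n NHc by auto
  have nK: "n \<notin> K"
    using n g0 subgroup.rcos_const[OF assms(4) assms(1)] by auto
  define w0 where "w0 = [Inr True, Inl n, Inr False, Inl (inv\<^bsub>H\<^esub> (\<phi> n))]"
  have w0w: "w0 \<in> hnn_words H" using nc hs.phi_closed by (simp add: w0_def hnn_words_def)
  have gc: "hnn_class H K \<phi> w0 \<in> carrier (HNN H K \<phi>)" using hs.cls_carrier[OF w0w] .
  have gne: "hnn_class H K \<phi> w0 \<noteq> \<one>\<^bsub>HNN H K \<phi>\<^esub>"
    using hs.cls_eq[OF w0w, of "[]"] hs.w0_nontriv[OF nc nK] hs.one_GG by (simp add: w0_def)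
  obtain N where NG: "N \<lhd> HNN H K \<phi>" and Nfin: "finite (rcosets\<^bsub>HNN H K \<phi>\<^esub> N)"
      and gN: "hnn_class H K \<phi> w0 \<notin> N"
    using RF gc gne unfolding residually_finite_def by blast
  interpret NN: normal N "HNN H K \<phi>" by (rule NG)
  interpret hg: hnn_grp H K \<phi> by unfold_locales
  let ?G = "HNN H K \<phi>"
  let ?e = "\<lambda>x. hnn_class H K \<phi> [Inl x]"
  define L where "L = {x \<in> carrier H. ?e x \<in> N \<and> ?e (\<phi> x) \<in> N}"
  define M where "M = (\<lambda>l. K #>\<^bsub>H\<^esub> l) ` (L \<inter> NH)"
  have Lmult: "x \<otimes>\<^bsub>H\<^esub> y \<in> L \<inter> NH" if "x \<in> L \<inter> NH" "y \<in> L \<inter> NH" for x y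
  proof -
    have c: "x \<in> carrier H" "y \<in> carrier H" using that by (auto simp: L_def)
    have "?e (x \<otimes>\<^bsub>H\<^esub> y) \<in> N" using that c by (simp add: hg.e_mult L_def NN.m_closed)
    moreover have "?e (\<phi> (x \<otimes>\<^bsub>H\<^esub> y)) \<in> N"
      using that c by (simp add: hs.phi_mult hs.phi_closed hg.e_mult L_def NN.m_closed)
    moreover have "x \<otimes>\<^bsub>H\<^esub> y \<in> NH" using that subNH by (simp add: subgroup.m_closed)
    ultimately show ?thesis using c by (simp add: L_def)
  qed
  have Linv: "inv\<^bsub>H\<^esub> x \<in> L \<inter> NH" if "x \<in> L \<inter> NH" for x
  proof -
    have c: "x \<in> carrier H" using that by (auto simp: L_def)
    have "?e x \<in> N" using that by (simp add: L_def)
    then have "inv\<^bsub>?G\<^esub> ?e x \<in> N" by (rule NN.m_inv_closed)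
    then have "?e (inv\<^bsub>H\<^esub> x) \<in> N" using hg.e_inv[OF c] by simp
    moreover have "?e (\<phi> x) \<in> N" using that by (simp add: L_def)
    then have "inv\<^bsub>?G\<^esub> ?e (\<phi> x) \<in> N" by (rule NN.m_inv_closed)
    then have "?e (\<phi> (inv\<^bsub>H\<^esub> x)) \<in> N"
      using hs.phi_inv[OF c] hg.e_inv[OF hs.phi_closed[OF c]] by simp
    moreover have "inv\<^bsub>H\<^esub> x \<in> NH" using that subNH by (simp add: subgroup.m_inv_closed)
    ultimately show ?thesis using c by (simp add: L_def)
  qed
  have Lone: "\<one>\<^bsub>H\<^esub> \<in> L \<inter> NH"
    using hg.e_one hs.phi_hom subNH NN.one_closed
    by (simp add: L_def hom_one[OF hs.phi_hom] subgroup.one_closed)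
  have Lconj: "y \<otimes>\<^bsub>H\<^esub> l \<otimes>\<^bsub>H\<^esub> inv\<^bsub>H\<^esub> y \<in> L \<inter> NH" if "y \<in> NH" "l \<in> L \<inter> NH" for y l
  proof -
    have c: "y \<in> carrier H" "l \<in> carrier H" using that NHc by (auto simp: L_def)
    have "?e (y \<otimes>\<^bsub>H\<^esub> l \<otimes>\<^bsub>H\<^esub> inv\<^bsub>H\<^esub> y) = ?e y \<otimes>\<^bsub>?G\<^esub> ?e l \<otimes>\<^bsub>?G\<^esub> inv\<^bsub>?G\<^esub> ?e y"
      using c by (simp add: hg.e_mult hg.e_inv)
    moreover have "?e y \<otimes>\<^bsub>?G\<^esub> ?e l \<otimes>\<^bsub>?G\<^esub> inv\<^bsub>?G\<^esub> ?e y \<in> N"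
      using NN.inv_op_closed2 hg.e_carr c that by (simp add: L_def)
    moreover have "?e (\<phi> (y \<otimes>\<^bsub>H\<^esub> l \<otimes>\<^bsub>H\<^esub> inv\<^bsub>H\<^esub> y))
        = ?e (\<phi> y) \<otimes>\<^bsub>?G\<^esub> ?e (\<phi> l) \<otimes>\<^bsub>?G\<^esub> inv\<^bsub>?G\<^esub> ?e (\<phi> y)"
      using c by (simp add: hs.phi_mult hs.phi_inv hs.phi_closed hg.e_mult hg.e_inv)
    moreover have "?e (\<phi> y) \<otimes>\<^bsub>?G\<^esub> ?e (\<phi> l) \<otimes>\<^bsub>?G\<^esub> inv\<^bsub>?G\<^esub> ?e (\<phi> y) \<in> N"
      using NN.inv_op_closed2 hg.e_carr hs.phi_closed c that by (simp add: L_def)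
    moreover have "y \<otimes>\<^bsub>H\<^esub> l \<otimes>\<^bsub>H\<^esub> inv\<^bsub>H\<^esub> y \<in> NH"
      using that subNH by (simp add: subgroup.m_closed subgroup.m_inv_closed)
    ultimately show ?thesis using c by (simp add: L_def)
  qed
  have subM: "subgroup M Q0"
  proof (rule Q.subgroupI)
    show "M \<subseteq> carrier Q0" using cQ by (auto simp: M_def)
    show "M \<noteq> {}" using Lone by (auto simp: M_def)
    show "inv\<^bsub>Q0\<^esub> a \<in> M" if "a \<in> M" for a
      using that invQ Linv by (auto simp: M_def)
    show "a \<otimes>\<^bsub>Q0\<^esub> b \<in> M" if "a \<in> M" "b \<in> M" for a b
      using that multQ Lmult by (auto simp: M_def)
  qed
  have normM: "M \<lhd> Q0"
    unfolding Q.normal_inv_iff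
  proof (intro conjI ballI subM)
    fix x h assume x: "x \<in> carrier Q0" and h: "h \<in> M"
    obtain y where y: "y \<in> NH" "x = K #>\<^bsub>H\<^esub> y" using x cQ by auto
    obtain l where l: "l \<in> L \<inter> NH" "h = K #>\<^bsub>H\<^esub> l" using h by (auto simp: M_def)
    have yi: "inv\<^bsub>H\<^esub> y \<in> NH" using y subNH by (simp add: subgroup.m_inv_closed)
    have "x \<otimes>\<^bsub>Q0\<^esub> h \<otimes>\<^bsub>Q0\<^esub> inv\<^bsub>Q0\<^esub> x = K #>\<^bsub>H\<^esub> (y \<otimes>\<^bsub>H\<^esub> l \<otimes>\<^bsub>H\<^esub> inv\<^bsub>H\<^esub> y)"
      using y l yi invQ multQ subNH by (simp add: subgroup.m_closed)
    then show "x \<otimes>\<^bsub>Q0\<^esub> h \<otimes>\<^bsub>Q0\<^esub> inv\<^bsub>Q0\<^esub> x \<in> M"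
      using Lconj[OF y(1) l(1)] by (simp add: M_def)
  qed
  have finM: "finite (rcosets\<^bsub>Q0\<^esub> M)"
  proof -
    have "rcosets\<^bsub>Q0\<^esub> M = (\<lambda>y. M #>\<^bsub>Q0\<^esub> (K #>\<^bsub>H\<^esub> y)) ` NH"
      using cQ by (auto simp: RCOSETS_def)
    moreover have "finite ((\<lambda>y. M #>\<^bsub>Q0\<^esub> (K #>\<^bsub>H\<^esub> y)) ` NH)"
    proof (rule finite_image_factor[where g = "\<lambda>y. (N #>\<^bsub>?G\<^esub> ?e y, N #>\<^bsub>?G\<^esub> ?e (\<phi> y))"])
      have "(\<lambda>y. (N #>\<^bsub>?G\<^esub> ?e y, N #>\<^bsub>?G\<^esub> ?e (\<phi> y))) ` NH
          \<subseteq> (rcosets\<^bsub>?G\<^esub> N) \<times> (rcosets\<^bsub>?G\<^esub> N)"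
        using NHc hg.e_carr hs.phi_closed NN.rcosetsI NN.subset by auto
      then show "finite ((\<lambda>y. (N #>\<^bsub>?G\<^esub> ?e y, N #>\<^bsub>?G\<^esub> ?e (\<phi> y))) ` NH)"
        using Nfin finite_subset by blast
    next
      fix y y' assume y: "y \<in> NH" and y': "y' \<in> NH"
        and eq: "(N #>\<^bsub>?G\<^esub> ?e y, N #>\<^bsub>?G\<^esub> ?e (\<phi> y)) = (N #>\<^bsub>?G\<^esub> ?e y', N #>\<^bsub>?G\<^esub> ?e (\<phi> y'))"
      have c: "y \<in> carrier H" "y' \<in> carrier H" using y y' NHc by auto
      define d where "d = y' \<otimes>\<^bsub>H\<^esub> inv\<^bsub>H\<^esub> y"
      have dc: "d \<in> carrier H" using c by (simp add: d_def)
      have "?e y' \<in> N #>\<^bsub>?G\<^esub> ?e y"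
        using eq NN.repr_independenceD[OF NN.subgroup_axioms hg.e_carr[OF c(2)]] by simp
      then have "?e y' \<otimes>\<^bsub>?G\<^esub> inv\<^bsub>?G\<^esub> ?e y \<in> N"
        using NN.rcos_module_imp[OF NN.is_group hg.e_carr[OF c(1)]] by blast
      then have d1: "?e d \<in> N" using c by (simp add: d_def hg.e_mult hg.e_inv)
      have "?e (\<phi> y') \<in> N #>\<^bsub>?G\<^esub> ?e (\<phi> y)"
        using eq NN.repr_independenceD[OF NN.subgroup_axioms hg.e_carr[OF hs.phi_closed[OF c(2)]]] by simp
      then have "?e (\<phi> y') \<otimes>\<^bsub>?G\<^esub> inv\<^bsub>?G\<^esub> ?e (\<phi> y) \<in> N"
        using NN.rcos_module_imp[OF NN.is_group hg.e_carr[OF hs.phi_closed[OF c(1)]]] by blast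
      then have d2: "?e (\<phi> d) \<in> N" using c
        by (simp add: d_def hg.e_mult hg.e_inv hs.phi_mult hs.phi_inv hs.phi_closed)
      have dNH: "d \<in> NH" using y y' subNH by (simp add: d_def subgroup.m_closed subgroup.m_inv_closed)
      have dL: "d \<in> L \<inter> NH" using d1 d2 dc dNH by (simp add: L_def)
      have "d \<otimes>\<^bsub>H\<^esub> y = y'" using c by (simp add: d_def hs.m_assoc)
      then have "K #>\<^bsub>H\<^esub> y' = (K #>\<^bsub>H\<^esub> d) \<otimes>\<^bsub>Q0\<^esub> (K #>\<^bsub>H\<^esub> y)"
        using multQ dNH y by simp
      then have "K #>\<^bsub>H\<^esub> y' \<in> M #>\<^bsub>Q0\<^esub> (K #>\<^bsub>H\<^esub> y)"
        using dL by (auto simp: r_coset_def M_def)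
      then show "M #>\<^bsub>Q0\<^esub> (K #>\<^bsub>H\<^esub> y) = M #>\<^bsub>Q0\<^esub> (K #>\<^bsub>H\<^esub> y')"
        using Q.repr_independence[OF _ _ subM] cQ y by auto
    qed
    ultimately show ?thesis by simp
  qed
  have "g0 \<in> M" using g0N normM finM by blast
  then obtain l where l: "l \<in> L \<inter> NH" "K #>\<^bsub>H\<^esub> n = K #>\<^bsub>H\<^esub> l"
    using n by (auto simp: M_def)
  have lc: "l \<in> carrier H" using l by (simp add: L_def)
  have "n \<in> K #>\<^bsub>H\<^esub> l" using l(2) group.rcos_self[OF assms(1) nc assms(4)] by simp
  then obtain k where k: "k \<in> K" "n = k \<otimes>\<^bsub>H\<^esub> l" by (auto simp: r_coset_def)
  have "hnn_class H K \<phi> w0 \<in> N"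
    using hg.w0_in_N[OF NG k(1) lc] l by (simp add: w0_def k(2) L_def)
  then show False using gN by simp
qed

end
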